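(* Let $f:\mathbb{R}^d\to\mathbb{R}$ be bounded below by $f^*$ and smooth with non-negative constants $L_1,\dots,L_d$, i.e. $f(y)\le f(x)+\langle\nabla f(x),y-x\rangle+\sum_{i=1}^d\frac{L_i}{2}(y_i-x_i)^2$ for all $x,y$, and let $\bar L:=\frac1d\sum_i L_i$. Suppose the SPB assumption holds. Consider signSGD with Option 2: starting from $x_0$, $x_{k+1}=\arg\min\{f(x_k),\,f(x_k-\gamma_k\,\mathrm{sign}\,\hat g(x_k))\}$ (i.e. $x_{k+1}$ is whichever of the two points $x_k$ and $x_k-\gamma_k\mathrm{sign}\,\hat g(x_k)$ has smaller $f$-value), with $\hat g(x_k)$ a fresh draw of the estimator at $x_k$. (a) If $\gamma_k=\gamma_0/\sqrt{k+1}$ with $\gamma_0>0$, then for every $K\ge1$, $$\frac1K\sum_{k=0}^{K-1}\mathbb{E}\|\nabla f(x_k)\|_\rho\le\frac1{\sqrt K}\left[\frac{f(x_0)-f^*}{\gamma_0}+\gamma_0 d\bar L\right].$$ (b) If $\gamma_k\equiv\gamma>0$, then $\frac1K\sum_{k=0}^{K-1}\mathbb{E}\|\nabla f(x_k)\|_\rho\le\frac{f(x_0)-f^*}{\gamma K}+\frac{\gamma d\bar L}{2}$.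
   Context: Notation: $g(x):=\nabla f(x)$; $\mathrm{sign}\,t=1,0,-1$ for $t>0,t=0,t<0$, applied entrywise to vectors. SPB assumption: for every $x$ one has access to an independent (not necessarily unbiased) random estimator $\hat g(x)$ of $g(x)$ such that for every $i$ with $g_i(x)\ne0$, $\rho_i(x):=\mathrm{Prob}(\mathrm{sign}\,\hat g_i(x)=\mathrm{sign}\,g_i(x))>\tfrac12$. The $\rho$-norm is $\|g(x)\|_\rho:=\sum_{i=1}^d(2\rho_i(x)-1)|g_i(x)|$ (terms with $g_i(x)=0$ vanish). *)

theory Defs
  imports "HOL-Probability.Probability"
begin

definition sgnvec :: "real ^ 'd \<Rightarrow> real ^ 'd" where
  "sgnvec v = (\<chi> i. sgn (v $ i))"

definition signsgd_step ::
  "(real ^ 'd \<Rightarrow> real) \<Rightarrow> real \<Rightarrow> real ^ 'd \<Rightarrow> real ^ 'd \<Rightarrow> real ^ 'd" where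
  "signsgd_step f gam x gh =
     (let y = x - gam *\<^sub>R sgnvec gh in if f y < f x then y else x)"

text \<open>Distribution of the iterate x_k; G x is the distribution of the estimator
  ghat(x); each step uses a fresh independent draw.\<close>
fun signsgd_dist ::
  "(real ^ 'd \<Rightarrow> real) \<Rightarrow> (real ^ 'd \<Rightarrow> (real ^ 'd) measure) \<Rightarrow> (nat \<Rightarrow> real)
    \<Rightarrow> real ^ 'd \<Rightarrow> nat \<Rightarrow> (real ^ 'd) measure" where
  "signsgd_dist f G gam x0 0 = return borel x0"
| "signsgd_dist f G gam x0 (Suc k) =
     signsgd_dist f G gam x0 k \<bind>
       (\<lambda>x. G x \<bind> (\<lambda>v. return borel (signsgd_step f (gam k) x v)))"

definition rho ::
  "(real ^ 'd \<Rightarrow> (real ^ 'd) measure) \<Rightarrow> (real ^ 'd \<Rightarrow> real ^ 'd) \<Rightarrow> real ^ 'd \<Rightarrow> 'd \<Rightarrow> real" where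
  "rho G g x i = measure (G x) {v \<in> space (G x). sgn (v $ i) = sgn (g x $ i)}"

definition rho_norm ::
  "(real ^ 'd \<Rightarrow> (real ^ 'd) measure) \<Rightarrow> (real ^ 'd \<Rightarrow> real ^ 'd) \<Rightarrow> real ^ 'd \<Rightarrow> real" where
  "rho_norm G g x = (\<Sum>i\<in>UNIV. (2 * rho G g x i - 1) * \<bar>g x $ i\<bar>)"

end

theory Submission imports Defs begin
lemma sgnvec_sum: "sgnvec v = (\<Sum>i\<in>UNIV. sgn (v $ i) *\<^sub>R axis i 1)"
  by (simp add: sgnvec_def vec_eq_iff sum_component axis_def mult_ac if_distrib[of "\<lambda>t. _ * t"] cong: if_cong)
lemma sgnvec_meas[measurable]: "sgnvec \<in> borel_measurable (borel :: (real^'d) measure)"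
  unfolding sgnvec_sum[abs_def] by measurable

lemma sgn_ind_ineq: "\<bar>c\<bar> * (2 * indicator A v - 1) \<le> (c::real) * sgn (t::real)"
  if "v \<in> A \<longleftrightarrow> sgn t = sgn c"
  using that by (cases "c > 0"; cases "c < 0"; cases "t > 0"; cases "t < 0") (auto simp: sgn_if indicator_def)

lemma coord_bound:
  fixes M :: "(real^'d) measure"
  assumes P: "prob_space M" and S[measurable_cong]: "sets M = sets borel"
  shows "(2 * measure M {v \<in> space M. sgn (v $ i) = sgn c} - 1) * \<bar>c\<bar> \<le> (\<integral>v. c * sgn (v $ i) \<partial>M)"
proof -
  interpret prob_space M by (rule P)
  let ?A = "{v \<in> space M. sgn (v $ i) = sgn c}"
  have A[measurable]: "?A \<in> sets M" by measurable
  have I: "integrable M (\<lambda>v. 2 * indicator ?A v - 1 :: real)"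
    by (intro Bochner_Integration.integrable_diff integrable_mult_right integrable_real_indicator integrable_const) (auto simp: A emeasure_eq_measure)
  have "(\<integral>v. \<bar>c\<bar> * (2 * indicator ?A v - 1) \<partial>M) \<le> (\<integral>v. c * sgn (v $ i) \<partial>M)"
  proof (rule integral_mono)
    show "integrable M (\<lambda>v. \<bar>c\<bar> * (2 * indicator ?A v - 1))" using I by simp
    show "integrable M (\<lambda>v. c * sgn (v $ i))"
      by (rule integrable_const_bound[where B="\<bar>c\<bar>"]) (auto simp: abs_mult abs_sgn_eq)
    show "\<bar>c\<bar> * (2 * indicator ?A v - 1) \<le> c * sgn (v $ i)" if "v \<in> space M" for v
      by (rule sgn_ind_ineq) (use that in auto)
  qed
  moreover have "(\<integral>v. \<bar>c\<bar> * (2 * indicator ?A v - 1) \<partial>M) = (2 * measure M ?A - 1) * \<bar>c\<bar>"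
  proof -
    have "(\<integral>v. (2::real) * indicator ?A v - 1 \<partial>M) = 2 * measure M ?A - 1"
    proof -
      have "(\<integral>v. (2::real) * indicator ?A v - 1 \<partial>M) = (\<integral>v. 2 * indicator ?A v \<partial>M) - (\<integral>v. 1 \<partial>M)"
        by (rule Bochner_Integration.integral_diff) (auto intro!: integrable_real_indicator simp: A emeasure_eq_measure)
      then show ?thesis by (simp add: prob_space)
    qed
    then show ?thesis by (simp add: mult.commute)
  qed
  ultimately show ?thesis by linarith
qed

context
  fixes f :: "real ^ 'd \<Rightarrow> real"
    and g :: "real ^ 'd \<Rightarrow> real ^ 'd"
    and G :: "real ^ 'd \<Rightarrow> (real ^ 'd) measure"
    and L :: "'d \<Rightarrow> real"
    and fstar :: real
  assumes grad: "\<And>x. (f has_derivative (\<lambda>h. g x \<bullet> h)) (at x)"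
    and lower: "\<And>x. fstar \<le> f x"
    and L_nonneg: "\<And>i. 0 \<le> L i"
    and smooth: "\<And>x y. f y \<le> f x + g x \<bullet> (y - x) + (\<Sum>i\<in>UNIV. L i / 2 * (y $ i - x $ i)\<^sup>2)"
    and kernel: "G \<in> borel \<rightarrow>\<^sub>M prob_algebra borel"
    and SPB: "\<And>x i. g x $ i \<noteq> 0 \<Longrightarrow> rho G g x i > 1 / 2"
begin

lemma f_cont: "continuous_on UNIV f"
  by (intro continuous_at_imp_continuous_on ballI has_derivative_continuous[OF grad])

lemma f_meas[measurable]: "f \<in> borel_measurable borel"
  using f_cont by (rule borel_measurable_continuous_onI)

lemma Gx: "prob_space (G x)" "sets (G x) = sets borel"
  using measurable_space[OF kernel, of x] by (auto simp: space_prob_algebra)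

lemma rho_norm_nonneg: "0 \<le> rho_norm G g x"
  unfolding rho_norm_def
proof (rule sum_nonneg)
  fix i
  show "0 \<le> (2 * rho G g x i - 1) * \<bar>g x $ i\<bar>"
    using SPB[of x i] by (cases "g x $ i = 0") auto
qed

lemma step_le: "f (signsgd_step f gam x v) \<le> f x"
  "f (signsgd_step f gam x v) \<le> f (x - gam *\<^sub>R sgnvec v)"
  by (auto simp: signsgd_step_def Let_def)

lemma smooth_step:
  "f (signsgd_step f gam x v) - fstar \<le>
     (f x - fstar + gam\<^sup>2 / 2 * (\<Sum>i\<in>UNIV. L i)) - gam * (\<Sum>i\<in>UNIV. g x $ i * sgn (v $ i))"
proof -
  let ?y = "x - gam *\<^sub>R sgnvec v"
  have "f ?y \<le> f x + g x \<bullet> (?y - x) + (\<Sum>i\<in>UNIV. L i / 2 * (?y $ i - x $ i)\<^sup>2)"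
    by (rule smooth)
  also have "g x \<bullet> (?y - x) = - gam * (\<Sum>i\<in>UNIV. g x $ i * sgn (v $ i))"
    by (simp add: inner_vec_def sgnvec_def sum_distrib_left mult_ac sum_negf)
  also have "(\<Sum>i\<in>UNIV. L i / 2 * (?y $ i - x $ i)\<^sup>2) \<le> (\<Sum>i\<in>UNIV. L i / 2 * gam\<^sup>2)"
  proof (rule sum_mono)
    fix i
    have "(?y $ i - x $ i)\<^sup>2 = gam\<^sup>2 * (sgn (v $ i))\<^sup>2"
      by (simp add: sgnvec_def power_mult_distrib)
    also have "\<dots> \<le> gam\<^sup>2" by (auto simp: sgn_if)
    finally show "L i / 2 * (?y $ i - x $ i)\<^sup>2 \<le> L i / 2 * gam\<^sup>2"
      using L_nonneg[of i] by (intro mult_left_mono) auto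
  qed
  also have "(\<Sum>i\<in>UNIV. L i / 2 * gam\<^sup>2) = gam\<^sup>2 / 2 * (\<Sum>i\<in>UNIV. L i)"
    by (simp add: sum_distrib_left sum_distrib_right sum_divide_distrib mult_ac)
  finally show ?thesis using step_le(2)[of gam x v] by linarith
qed

lemma step_meas_v[measurable]: "(\<lambda>v. signsgd_step f gam x v) \<in> borel \<rightarrow>\<^sub>M borel"
  unfolding signsgd_step_def Let_def by measurable

lemma step_meas2: "(\<lambda>(x,v). signsgd_step f gam x v) \<in> (borel \<Otimes>\<^sub>M borel) \<rightarrow>\<^sub>M borel"
  unfolding signsgd_step_def Let_def by measurable

lemma key:
  fixes x :: "real ^ 'd"
  assumes gam: "gam > 0"
  defines "h \<equiv> (\<integral>v. f (signsgd_step f gam x v) - fstar \<partial>G x)"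
  shows "(\<integral>\<^sup>+v. ennreal (f (signsgd_step f gam x v) - fstar) \<partial>G x) = ennreal h"
    and "0 \<le> h" and "h \<le> f x - fstar"
    and "gam * rho_norm G g x + h \<le> f x - fstar + gam\<^sup>2 / 2 * (\<Sum>i\<in>UNIV. L i)"
proof -
  interpret P: prob_space "G x" by (rule Gx)
  note S[measurable_cong] = Gx(2)[of x]
  have int: "integrable (G x) (\<lambda>v. f (signsgd_step f gam x v) - fstar)"
    by (rule P.integrable_const_bound[where B="f x - fstar"])
       (use lower step_le in \<open>auto intro!: AE_I2 simp: abs_le_iff\<close>)
  show "(\<integral>\<^sup>+v. ennreal (f (signsgd_step f gam x v) - fstar) \<partial>G x) = ennreal h"
    unfolding h_def using int lower by (intro nn_integral_eq_integral) (auto intro!: AE_I2)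
  show "0 \<le> h" unfolding h_def using lower by (intro Bochner_Integration.integral_nonneg) (simp add: algebra_simps)
  have "h \<le> (\<integral>v. f x - fstar \<partial>G x)"
    unfolding h_def using int step_le by (intro integral_mono) auto
  then show "h \<le> f x - fstar" by (simp add: P.prob_space)
  let ?c = "f x - fstar + gam\<^sup>2 / 2 * (\<Sum>i\<in>UNIV. L i)"
  have intc: "integrable (G x) (\<lambda>v. g x $ i * sgn (v $ i))" for i
    by (rule P.integrable_const_bound[where B="\<bar>g x $ i\<bar>"]) (auto simp: abs_mult abs_sgn_eq)
  have "h \<le> (\<integral>v. ?c - gam * (\<Sum>i\<in>UNIV. g x $ i * sgn (v $ i)) \<partial>G x)"
    unfolding h_def using int intc smooth_step by (intro integral_mono) auto
  also have "\<dots> = ?c - gam * (\<Sum>i\<in>UNIV. (\<integral>v. g x $ i * sgn (v $ i) \<partial>G x))"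
    using intc by (simp add: Bochner_Integration.integral_diff P.prob_space Bochner_Integration.integral_sum)
  also have "rho_norm G g x \<le> (\<Sum>i\<in>UNIV. (\<integral>v. g x $ i * sgn (v $ i) \<partial>G x))"
    unfolding rho_norm_def rho_def by (intro sum_mono coord_bound Gx)
  then have "?c - gam * (\<Sum>i\<in>UNIV. (\<integral>v. g x $ i * sgn (v $ i) \<partial>G x)) \<le> ?c - gam * rho_norm G g x"
    using gam by (intro diff_left_mono mult_left_mono) auto
  finally show "gam * rho_norm G g x + h \<le> ?c" by linarith
qed

lemma N_meas: "(\<lambda>x. G x \<bind> (\<lambda>v. return borel (signsgd_step f gam x v))) \<in> borel \<rightarrow>\<^sub>M prob_algebra borel"
proof (rule measurable_bind_prob_space2[OF kernel])
  have "(\<lambda>p. return borel ((\<lambda>(x,v). signsgd_step f gam x v) p)) \<in> (borel \<Otimes>\<^sub>M borel) \<rightarrow>\<^sub>M prob_algebra borel"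
    by (rule measurable_compose[OF step_meas2 measurable_return_prob_space])
  then show "(\<lambda>(x, y). return borel (signsgd_step f gam x y)) \<in> borel \<Otimes>\<^sub>M borel \<rightarrow>\<^sub>M prob_algebra borel"
    by (simp add: split_beta')
qed

lemma D_space: "signsgd_dist f G gam x0 k \<in> space (prob_algebra borel)"
proof (induction k)
  case 0
  show ?case using measurable_space[OF measurable_return_prob_space, of x0 borel] by simp
next
  case (Suc k)
  have "(\<lambda>M. M \<bind> (\<lambda>x. G x \<bind> (\<lambda>v. return borel (signsgd_step f (gam k) x v)))) \<in> prob_algebra borel \<rightarrow>\<^sub>M prob_algebra borel"
    by (rule measurable_bind_prob_space[OF measurable_ident_sets[OF refl] N_meas])
  from measurable_space[OF this Suc.IH] show ?case by simp
qed

lemma D_sets: "sets (signsgd_dist f G gam x0 k) = sets borel"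
  and D_prob: "prob_space (signsgd_dist f G gam x0 k)"
  using D_space[of gam x0 k] by (auto simp: space_prob_algebra)

lemma nn_D_Suc:
  assumes F[measurable]: "F \<in> borel_measurable borel"
  shows "(\<integral>\<^sup>+y. F y \<partial>signsgd_dist f G gam x0 (Suc k)) =
     (\<integral>\<^sup>+x. (\<integral>\<^sup>+v. F (signsgd_step f (gam k) x v) \<partial>G x) \<partial>signsgd_dist f G gam x0 k)"
proof -
  let ?N = "\<lambda>x. G x \<bind> (\<lambda>v. return borel (signsgd_step f (gam k) x v))"
  have N: "?N \<in> signsgd_dist f G gam x0 k \<rightarrow>\<^sub>M subprob_algebra borel"
    using measurable_prob_algebraD[OF N_meas] by (subst measurable_cong_sets[OF D_sets refl])
  have "(\<integral>\<^sup>+y. F y \<partial>signsgd_dist f G gam x0 (Suc k)) = (\<integral>\<^sup>+x. (\<integral>\<^sup>+y. F y \<partial>?N x) \<partial>signsgd_dist f G gam x0 k)"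
    by (simp add: nn_integral_bind[OF F N])
  also have "\<dots> = (\<integral>\<^sup>+x. (\<integral>\<^sup>+v. F (signsgd_step f (gam k) x v) \<partial>G x) \<partial>signsgd_dist f G gam x0 k)"
  proof (rule nn_integral_cong)
    fix x
    have R: "(\<lambda>v. return borel (signsgd_step f (gam k) x v)) \<in> G x \<rightarrow>\<^sub>M subprob_algebra borel"
      by (subst measurable_cong_sets[OF Gx(2) refl]) (rule measurable_compose[OF step_meas_v return_measurable])
    show "(\<integral>\<^sup>+y. F y \<partial>?N x) = (\<integral>\<^sup>+v. F (signsgd_step f (gam k) x v) \<partial>G x)"
      by (simp add: nn_integral_bind[OF F R] nn_integral_return)
  qed
  finally show ?thesis .
qed

lemma step_ineq:
  fixes x0 :: "real ^ 'd" and gam :: "nat \<Rightarrow> real"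
  assumes gam: "gam k > 0"
  defines "D \<equiv> signsgd_dist f G gam x0"
  shows "ennreal (gam k) * (\<integral>\<^sup>+x. ennreal (rho_norm G g x) \<partial>D k)
           + (\<integral>\<^sup>+x. ennreal (f x - fstar) \<partial>D (Suc k))
         \<le> (\<integral>\<^sup>+x. ennreal (f x - fstar) \<partial>D k) + ennreal ((gam k)\<^sup>2 / 2 * (\<Sum>i\<in>UNIV. L i))"
    and "(\<integral>\<^sup>+x. ennreal (f x - fstar) \<partial>D (Suc k)) \<le> (\<integral>\<^sup>+x. ennreal (f x - fstar) \<partial>D k)"
proof -
  define c where "c = (gam k)\<^sup>2 / 2 * (\<Sum>i\<in>UNIV. L i)"
  define hh where "hh x = (\<integral>v. f (signsgd_step f (gam k) x v) - fstar \<partial>G x)" for x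
  note K = key[OF gam, folded hh_def]
  have Dsets[measurable_cong]: "sets (D k) = sets borel" unfolding D_def by (rule D_sets)
  interpret DP: prob_space "D k" unfolding D_def by (rule D_prob)
  have Hm: "(\<lambda>x. \<integral>\<^sup>+v. ennreal (f (signsgd_step f (gam k) x v) - fstar) \<partial>G x) \<in> borel_measurable borel"
  proof (rule nn_integral_measurable_subprob_algebra2[where N=borel])
    show "(\<lambda>(x, y). ennreal (f (signsgd_step f (gam k) x y) - fstar)) \<in> borel_measurable (borel \<Otimes>\<^sub>M borel)"
      using step_meas2[of "gam k"] by (simp add: split_beta')
    show "G \<in> borel \<rightarrow>\<^sub>M subprob_algebra borel" by (rule measurable_prob_algebraD[OF kernel])
  qed
  have hh_eq: "hh x = enn2real (\<integral>\<^sup>+v. ennreal (f (signsgd_step f (gam k) x v) - fstar) \<partial>G x)" for x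
    using K(1)[of x] K(2)[of x] by simp
  have hhm[measurable]: "hh \<in> borel_measurable borel"
    unfolding hh_eq[abs_def] using Hm by measurable
  have phiS: "(\<integral>\<^sup>+x. ennreal (f x - fstar) \<partial>D (Suc k)) = (\<integral>\<^sup>+x. ennreal (hh x) \<partial>D k)"
    unfolding D_def by (subst nn_D_Suc) (auto intro!: nn_integral_cong simp: K(1))
  show "(\<integral>\<^sup>+x. ennreal (f x - fstar) \<partial>D (Suc k)) \<le> (\<integral>\<^sup>+x. ennreal (f x - fstar) \<partial>D k)"
    unfolding phiS by (intro nn_integral_mono ennreal_leI K(3))
  define u where "u x = f x - fstar + c - hh x" for x
  have u_nn: "0 \<le> u x" "gam k * rho_norm G g x \<le> u x" for x
    using K(4)[of x] mult_nonneg_nonneg[OF less_imp_le[OF gam] rho_norm_nonneg[of x]] unfolding u_def c_def by auto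
  have "(\<integral>\<^sup>+x. ennreal (rho_norm G g x) \<partial>D k) \<le> (\<integral>\<^sup>+x. ennreal (u x / gam k) \<partial>D k)"
    using u_nn gam by (intro nn_integral_mono ennreal_leI) (simp add: field_simps)
  then have "ennreal (gam k) * (\<integral>\<^sup>+x. ennreal (rho_norm G g x) \<partial>D k) \<le> ennreal (gam k) * (\<integral>\<^sup>+x. ennreal (u x / gam k) \<partial>D k)"
    by (rule mult_left_mono) simp
  also have "\<dots> = (\<integral>\<^sup>+x. ennreal (gam k) * ennreal (u x / gam k) \<partial>D k)"
    by (rule nn_integral_cmult[symmetric]) (simp add: u_def)
  also have "\<dots> = (\<integral>\<^sup>+x. ennreal (u x) \<partial>D k)"
    using gam u_nn by (intro nn_integral_cong) (simp add: ennreal_mult[symmetric])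
  finally have 1: "ennreal (gam k) * (\<integral>\<^sup>+x. ennreal (rho_norm G g x) \<partial>D k) \<le> (\<integral>\<^sup>+x. ennreal (u x) \<partial>D k)" .
  have "(\<integral>\<^sup>+x. ennreal (u x) \<partial>D k) + (\<integral>\<^sup>+x. ennreal (hh x) \<partial>D k) = (\<integral>\<^sup>+x. ennreal (u x) + ennreal (hh x) \<partial>D k)"
    by (rule nn_integral_add[symmetric]) (auto simp: u_def)
  also have "\<dots> = (\<integral>\<^sup>+x. ennreal (f x - fstar) + ennreal c \<partial>D k)"
    using u_nn K(2) lower by (intro nn_integral_cong) (simp add: ennreal_plus[symmetric] u_def c_def L_nonneg sum_nonneg del: ennreal_plus)
  also have "\<dots> = (\<integral>\<^sup>+x. ennreal (f x - fstar) \<partial>D k) + ennreal c"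
    by (subst nn_integral_add) (auto simp: DP.emeasure_space_1)
  finally have 2: "(\<integral>\<^sup>+x. ennreal (u x) \<partial>D k) + (\<integral>\<^sup>+x. ennreal (hh x) \<partial>D k) = (\<integral>\<^sup>+x. ennreal (f x - fstar) \<partial>D k) + ennreal c" .
  show "ennreal (gam k) * (\<integral>\<^sup>+x. ennreal (rho_norm G g x) \<partial>D k)
           + (\<integral>\<^sup>+x. ennreal (f x - fstar) \<partial>D (Suc k))
         \<le> (\<integral>\<^sup>+x. ennreal (f x - fstar) \<partial>D k) + ennreal ((gam k)\<^sup>2 / 2 * (\<Sum>i\<in>UNIV. L i))"
    unfolding phiS c_def[symmetric] using 1 2 by (metis add_right_mono)
qed

lemma sum_bound:
  fixes x0 :: "real ^ 'd" and gam :: "nat \<Rightarrow> real" and K :: nat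
  assumes gpos: "\<And>k. gam k > 0" and gmono: "\<And>k. gam (Suc k) \<le> gam k" and K: "K \<ge> 1"
  shows "\<exists>a. (\<Sum>k<K. \<integral>\<^sup>+x. ennreal (rho_norm G g x) \<partial>signsgd_dist f G gam x0 k) = ennreal (\<Sum>k<K. a k)
     \<and> (\<Sum>k<K. a k) \<le> (f x0 - fstar) / gam (K - 1) + (\<Sum>i\<in>UNIV. L i) / 2 * (\<Sum>k<K. gam k)"
proof -
  define D where "D = signsgd_dist f G gam x0"
  define phi where "phi k = (\<integral>\<^sup>+x. ennreal (f x - fstar) \<partial>D k)" for k
  define A where "A k = (\<integral>\<^sup>+x. ennreal (rho_norm G g x) \<partial>D k)" for k
  define S where "S = (\<Sum>i\<in>UNIV. L i)"
  have S_nn: "0 \<le> S" unfolding S_def using L_nonneg by (simp add: sum_nonneg)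
  have I1: "ennreal (gam k) * A k + phi (Suc k) \<le> phi k + ennreal ((gam k)\<^sup>2 / 2 * S)" for k
    using step_ineq(1)[where gam=gam and k=k and ?x0.0=x0, OF gpos] unfolding A_def phi_def D_def S_def .
  have I2: "phi (Suc k) \<le> phi k" for k
    using step_ineq(2)[where gam=gam and k=k and ?x0.0=x0, OF gpos] unfolding A_def phi_def D_def S_def .
  have phi0: "phi 0 = ennreal (f x0 - fstar)"
    unfolding phi_def D_def by (simp add: nn_integral_return)
  have phi_le: "phi k \<le> phi 0" for k
    by (induction k) (use I2 order_trans in auto)
  define p where "p k = enn2real (phi k)" for k
  have phi_fin: "phi k < \<top>" for k
    using phi_le[of k] phi0 by (metis ennreal_less_top order_le_less_trans)
  have phi_eq: "phi k = ennreal (p k)" and p_nn: "0 \<le> p k" for k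
    unfolding p_def using phi_fin[of k] by (auto simp: ennreal_enn2real_if)
  have p0: "p 0 = f x0 - fstar" unfolding p_def phi0 using lower[of x0] by simp
  have A_fin: "A k < \<top>" for k
  proof -
    have "ennreal (gam k) * A k < \<top>"
      using I1[of k] phi_fin[of k] by (metis add_increasing2 ennreal_add_less_top ennreal_less_top le_less_trans zero_le)
    then show ?thesis using gpos[of k]
      by (auto simp: ennreal_mult_less_top)
  qed
  define a where "a k = enn2real (A k)" for k
  have A_eq: "A k = ennreal (a k)" and a_nn: "0 \<le> a k" for k
    unfolding a_def using A_fin[of k] by (auto simp: ennreal_enn2real_if)
  have R1: "gam k * a k + p (Suc k) \<le> p k + (gam k)\<^sup>2 / 2 * S" for k
  proof -
    have "ennreal (gam k * a k + p (Suc k)) \<le> ennreal (p k + (gam k)\<^sup>2 / 2 * S)"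
      using I1[of k] gpos[of k] a_nn[of k] p_nn S_nn
      by (simp add: A_eq phi_eq ennreal_mult[symmetric] ennreal_plus[symmetric] del: ennreal_plus)
    then show ?thesis using p_nn S_nn by (subst (asm) ennreal_le_iff) auto
  qed
  have R2: "p (Suc k) \<le> p k" for k
    using I2[of k] p_nn by (simp add: phi_eq)
  have pdec: "p k \<le> p 0" for k by (induction k) (use R2 order_trans in auto)
  have ak: "a k \<le> (p k - p (Suc k)) / gam k + gam k * S / 2" for k
    using R1[of k] gpos[of k] by (simp add: field_simps power2_eq_square)
  have tel: "(\<Sum>k<Suc n. (p k - p (Suc k)) / gam k) \<le> (p 0 - p (Suc n)) / gam n" for n
  proof (induction n)
    case 0 then show ?case by simp
  next
    case (Suc n)
    have "(p 0 - p (Suc n)) / gam n \<le> (p 0 - p (Suc n)) / gam (Suc n)"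
      using pdec[of "Suc n"] gpos gmono[of n] by (intro divide_left_mono) auto
    then have "(\<Sum>k<Suc (Suc n). (p k - p (Suc k)) / gam k)
        \<le> (p 0 - p (Suc n)) / gam (Suc n) + (p (Suc n) - p (Suc (Suc n))) / gam (Suc n)"
      using Suc.IH by simp
    also have "\<dots> = (p 0 - p (Suc (Suc n))) / gam (Suc n)" by (simp add: add_divide_distrib[symmetric])
    finally show ?case .
  qed
  obtain n where n: "K = Suc n" using K by (cases K) auto
  have "(\<Sum>k<K. a k) \<le> (\<Sum>k<K. (p k - p (Suc k)) / gam k + gam k * S / 2)"
    by (rule sum_mono) (rule ak)
  also have "\<dots> = (\<Sum>k<K. (p k - p (Suc k)) / gam k) + S / 2 * (\<Sum>k<K. gam k)"
    by (simp add: sum.distrib sum_distrib_left mult_ac)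
  also have "(\<Sum>k<K. (p k - p (Suc k)) / gam k) \<le> p 0 / gam (K - 1)"
  proof -
    have "(p 0 - p (Suc n)) / gam n \<le> p 0 / gam n"
      using p_nn[of "Suc n"] gpos[of n] by (intro divide_right_mono) auto
    then show ?thesis using tel[of n] unfolding n by simp
  qed
  finally have "(\<Sum>k<K. a k) \<le> (f x0 - fstar) / gam (K - 1) + S / 2 * (\<Sum>k<K. gam k)"
    by (simp add: p0)
  moreover have "(\<Sum>k<K. A k) = ennreal (\<Sum>k<K. a k)"
    by (simp add: A_eq a_nn)
  ultimately show ?thesis unfolding A_def D_def S_def by blast
qed

end

lemma sqrt_sum: "(\<Sum>k<K. 1 / sqrt (real k + 1)) \<le> 2 * sqrt (real K)"
proof (induction K)
  case 0 then show ?case by simp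
next
  case (Suc K)
  define s where "s = sqrt (real K)"
  define t where "t = sqrt (real K + 1)"
  have t: "t > 0" unfolding t_def by simp
  have s2: "s^2 = real K" and t2: "t^2 = real K + 1" unfolding s_def t_def by simp_all
  have "0 \<le> (s - t)^2" by simp
  then have "2 * s * t + 1 \<le> 2 * t^2" using s2 t2 by (simp add: power2_eq_square algebra_simps)
  then have "2 * s + 1 / t \<le> 2 * t" using t by (simp add: field_simps power2_eq_square)
  then show ?case using Suc.IH unfolding s_def t_def by (simp add: add.commute)
qed

theorem theorem2:
  fixes f :: "real ^ 'd \<Rightarrow> real"
    and g :: "real ^ 'd \<Rightarrow> real ^ 'd"
    and G :: "real ^ 'd \<Rightarrow> (real ^ 'd) measure"
    and L :: "'d \<Rightarrow> real"
    and fstar :: real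
    and x0 :: "real ^ 'd"
  assumes grad: "\<And>x. (f has_derivative (\<lambda>h. g x \<bullet> h)) (at x)"
    and lower: "\<And>x. fstar \<le> f x"
    and L_nonneg: "\<And>i. 0 \<le> L i"
    and smooth: "\<And>x y. f y \<le> f x + g x \<bullet> (y - x) + (\<Sum>i\<in>UNIV. L i / 2 * (y $ i - x $ i)\<^sup>2)"
    and kernel: "G \<in> borel \<rightarrow>\<^sub>M prob_algebra borel"
    and SPB: "\<And>x i. g x $ i \<noteq> 0 \<Longrightarrow> rho G g x i > 1 / 2"
  shows
    "(\<forall>gam0 > 0. \<forall>K \<ge> 1.
        ennreal (1 / real K) *
          (\<Sum>k<K. \<integral>\<^sup>+ x. ennreal (rho_norm G g x)
              \<partial>signsgd_dist f G (\<lambda>k. gam0 / sqrt (real k + 1)) x0 k)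
        \<le> ennreal (1 / sqrt (real K) *
             ((f x0 - fstar) / gam0 + gam0 * real CARD('d) * ((\<Sum>i\<in>UNIV. L i) / real CARD('d)))))
     \<and>
     (\<forall>gam > 0. \<forall>K \<ge> 1.
        ennreal (1 / real K) *
          (\<Sum>k<K. \<integral>\<^sup>+ x. ennreal (rho_norm G g x)
              \<partial>signsgd_dist f G (\<lambda>k. gam) x0 k)
        \<le> ennreal ((f x0 - fstar) / (gam * real K)
             + gam * real CARD('d) * ((\<Sum>i\<in>UNIV. L i) / real CARD('d)) / 2))"
proof -
  define S where "S = (\<Sum>i\<in>UNIV. L i)"
  have S_nn: "0 \<le> S" unfolding S_def using L_nonneg by (simp add: sum_nonneg)
  have dS: "real CARD('d) * (S / real CARD('d)) = S" by simp
  have p0: "0 \<le> f x0 - fstar" using lower[of x0] by simp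
  have A: "ennreal (1 / real K) *
          (\<Sum>k<K. \<integral>\<^sup>+ x. ennreal (rho_norm G g x)
              \<partial>signsgd_dist f G (\<lambda>k. gam0 / sqrt (real k + 1)) x0 k)
        \<le> ennreal (1 / sqrt (real K) *
             ((f x0 - fstar) / gam0 + gam0 * real CARD('d) * (S / real CARD('d))))"
    if g0: "gam0 > 0" and K: "K \<ge> 1" for gam0 K
  proof -
    let ?gam = "\<lambda>k. gam0 / sqrt (real k + 1)"
    have gpos: "\<And>k. ?gam k > 0" using g0 by simp
    have gmono: "\<And>k. ?gam (Suc k) \<le> ?gam k" using g0 by (intro divide_left_mono) auto
    have "\<exists>a. (\<Sum>k<K. \<integral>\<^sup>+ x. ennreal (rho_norm G g x) \<partial>signsgd_dist f G ?gam x0 k) = ennreal (\<Sum>k<K. a k)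
      \<and> (\<Sum>k<K. a k) \<le> (f x0 - fstar) / ?gam (K - 1) + S / 2 * (\<Sum>k<K. ?gam k)"
      unfolding S_def by (rule sum_bound[OF grad lower L_nonneg smooth kernel]) (fact SPB gpos gmono K)+
    then obtain a where a1: "(\<Sum>k<K. \<integral>\<^sup>+ x. ennreal (rho_norm G g x) \<partial>signsgd_dist f G ?gam x0 k) = ennreal (\<Sum>k<K. a k)"
      and a2: "(\<Sum>k<K. a k) \<le> (f x0 - fstar) / ?gam (K - 1) + S / 2 * (\<Sum>k<K. ?gam k)"
      by blast
    have sK: "sqrt (real K) > 0" using K by simp
    have gK: "?gam (K - 1) = gam0 / sqrt (real K)" using K by (simp add: of_nat_diff)
    have "(\<Sum>k<K. ?gam k) = gam0 * (\<Sum>k<K. 1 / sqrt (real k + 1))" by (simp add: sum_distrib_left)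
    also have "\<dots> \<le> gam0 * (2 * sqrt (real K))" using g0 sqrt_sum[of K] by (intro mult_left_mono) auto
    finally have gs: "(\<Sum>k<K. ?gam k) \<le> gam0 * (2 * sqrt (real K))" .
    have "(\<Sum>k<K. a k) \<le> (f x0 - fstar) * sqrt (real K) / gam0 + S / 2 * (gam0 * (2 * sqrt (real K)))"
    proof -
      have "S / 2 * (\<Sum>k<K. ?gam k) \<le> S / 2 * (gam0 * (2 * sqrt (real K)))"
        using gs S_nn by (intro mult_left_mono) auto
      moreover have "(f x0 - fstar) / ?gam (K - 1) = (f x0 - fstar) * sqrt (real K) / gam0"
        unfolding gK by simp
      ultimately show ?thesis using a2 by linarith
    qed
    also have "\<dots> = sqrt (real K) * ((f x0 - fstar) / gam0 + gam0 * S)" by (simp add: field_simps)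
    finally have b: "(\<Sum>k<K. a k) \<le> sqrt (real K) * ((f x0 - fstar) / gam0 + gam0 * S)" .
    have "1 / real K * (\<Sum>k<K. a k) \<le> 1 / real K * (sqrt (real K) * ((f x0 - fstar) / gam0 + gam0 * S))"
      using b K by (intro mult_left_mono) auto
    also have "\<dots> = 1 / sqrt (real K) * ((f x0 - fstar) / gam0 + gam0 * S)"
      using sK by (simp add: field_simps real_sqrt_mult[symmetric])
    finally have c: "1 / real K * (\<Sum>k<K. a k) \<le> 1 / sqrt (real K) * ((f x0 - fstar) / gam0 + gam0 * S)" .
    show ?thesis unfolding a1 dS mult.assoc[symmetric]
      using c by (subst ennreal_mult'[symmetric]) (auto intro!: ennreal_leI simp: mult.assoc)
  qed
  have B: "ennreal (1 / real K) *
          (\<Sum>k<K. \<integral>\<^sup>+ x. ennreal (rho_norm G g x)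
              \<partial>signsgd_dist f G (\<lambda>k. gam) x0 k)
        \<le> ennreal ((f x0 - fstar) / (gam * real K)
             + gam * real CARD('d) * (S / real CARD('d)) / 2)"
    if g0: "gam > 0" and K: "K \<ge> 1" for gam K
  proof -
    have "\<exists>a. (\<Sum>k<K. \<integral>\<^sup>+ x. ennreal (rho_norm G g x) \<partial>signsgd_dist f G (\<lambda>k. gam) x0 k) = ennreal (\<Sum>k<K. a k)
      \<and> (\<Sum>k<K. a k) \<le> (f x0 - fstar) / (\<lambda>k. gam) (K - 1) + S / 2 * (\<Sum>k<K. (\<lambda>k. gam) k)"
      unfolding S_def by (rule sum_bound[OF grad lower L_nonneg smooth kernel]) (fact SPB, use g0 in simp, simp, use K in simp)
    then obtain a where a1: "(\<Sum>k<K. \<integral>\<^sup>+ x. ennreal (rho_norm G g x) \<partial>signsgd_dist f G (\<lambda>k. gam) x0 k) = ennreal (\<Sum>k<K. a k)"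
      and a2: "(\<Sum>k<K. a k) \<le> (f x0 - fstar) / gam + S / 2 * (\<Sum>k<K. gam)"
      by auto
    have "1 / real K * (\<Sum>k<K. a k) \<le> 1 / real K * ((f x0 - fstar) / gam + S / 2 * (real K * gam))"
      using a2 K by (intro mult_left_mono) auto
    also have "\<dots> = (f x0 - fstar) / (gam * real K) + gam * S / 2"
      using K g0 by (simp add: field_simps)
    finally have c: "1 / real K * (\<Sum>k<K. a k) \<le> (f x0 - fstar) / (gam * real K) + gam * S / 2" .
    show ?thesis unfolding a1 mult.assoc dS
      using c by (subst ennreal_mult'[symmetric]) (auto intro!: ennreal_leI simp: mult.assoc)
  qed
  show ?thesis using A B unfolding S_def by blast
qed

end
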